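(* Let $\tilde{\bm{w}}_1,\dots,\tilde{\bm{w}}_n\in\mathbb{R}^d$ and let $k\ge1$ be an integer. Suppose there exists a $k$-dimensional subspace $\bm{V}^*\subseteq\mathbb{R}^d$ with $d(\tilde{\bm{w}}_i,\bm{V}^* )\le\epsilon_{acc}$ for all $i\in[n]$. Let $(\bm{X}^*,t^* )$ be an optimal solution of the semidefinite program $\min_{\bm{X},t}\ t$ subject to $\tilde{\bm{w}}_i^\top\bm{X}\tilde{\bm{w}}_i\le t$ for $1\le i\le n$, $0\preceq\bm{X}\preceq I$, $\mathrm{Tr}(\bm{X})=d-k$, and let $\bm{X}^*=\sum_{i=1}^d\lambda_i\bm{u}_i\bm{u}_i^\top$ be an eigendecomposition with orthonormal $\bm{u}_i$ and $0\le\lambda_1\le\cdots\le\lambda_d\le1$. Then for any constant $c>1$ such that $ck$ is an integer with $ck\le d$, the $(ck-1)$-dimensional subspace $\bm{V}'=\mathrm{span}(\bm{u}_1,\dots,\bm{u}_{ck-1})$ satisfies $d(\tilde{\bm{w}}_i,\bm{V}')\le\sqrt{1+\frac{1}{c-1}}\,\epsilon_{acc}$ for all $i\in[n]$. In particular, for $c=2$, $\bm{V}'=\mathrm{span}(\bm{u}_1,\dots,\bm{u}_{2k-1})$ is a $(2k-1)$-dimensional subspace with $d(\tilde{\bm{w}}_i,\bm{V}')\le\sqrt{2}\,\epsilon_{acc}$ for all $i\in[n]$.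
   Context: For a vector $\bm{u}$ and subspace $\bm{F}$, $d(\bm{u},\bm{F})=\min_{\bm{v}\in\bm{F}}\|\bm{u}-\bm{v}\|_2$ is the orthogonal distance. $\preceq$ is the Loewner order on symmetric matrices. *)

theory Defs
  imports "HOL-Analysis.Analysis"
begin

definition psd :: "real^'n^'n \<Rightarrow> bool" where
  "psd A \<longleftrightarrow> transpose A = A \<and> (\<forall>x. 0 \<le> x \<bullet> (A *v x))"

definition loewner_le :: "real^'n^'n \<Rightarrow> real^'n^'n \<Rightarrow> bool" (infix "\<preceq>\<^sub>L" 50) where
  "A \<preceq>\<^sub>L B \<longleftrightarrow> transpose A = A \<and> transpose B = B \<and> psd (B - A)"

definition outer :: "real^'n \<Rightarrow> real^'n \<Rightarrow> real^'n^'n" where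
  "outer u v = (\<chi> a b. u $ a * v $ b)"

definition sdp_feasible :: "nat \<Rightarrow> (nat \<Rightarrow> real^'d) \<Rightarrow> nat \<Rightarrow> real^'d^'d \<Rightarrow> real \<Rightarrow> bool" where
  "sdp_feasible n w k X t \<longleftrightarrow>
     (\<forall>i\<in>{1..n}. w i \<bullet> (X *v w i) \<le> t) \<and>
     0 \<preceq>\<^sub>L X \<and> X \<preceq>\<^sub>L mat 1 \<and> trace X = real CARD('d) - real k"

definition sdp_optimal :: "nat \<Rightarrow> (nat \<Rightarrow> real^'d) \<Rightarrow> nat \<Rightarrow> real^'d^'d \<Rightarrow> real \<Rightarrow> bool" where
  "sdp_optimal n w k X t \<longleftrightarrow> sdp_feasible n w k X t \<and>
     (\<forall>(X'::real^'d^'d) t'. sdp_feasible n w k X' t' \<longrightarrow> t \<le> t')"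

end

theory Submission
  imports Defs
begin

lemma outer_mv: "outer u u *v x = (u \<bullet> x) *\<^sub>R u"
  by (simp add: vec_eq_iff outer_def matrix_vector_mult_def inner_vec_def sum_distrib_left mult.commute mult.left_commute)

lemma sum_mv: "(\<Sum>i\<in>S. f i) *v x = (\<Sum>i\<in>S. f i *v x)"
  unfolding vec_eq_iff matrix_vector_mult_def
  by (simp add: sum_component sum_distrib_right) (intro allI sum.swap)

lemma scale_mv: fixes A :: "real^'n^'n" shows "(c *\<^sub>R A) *v x = c *\<^sub>R (A *v x)"
  by (rule scaleR_matrix_vector_assoc[symmetric])

lemma trace_sum: "trace (\<Sum>i\<in>S. f i) = (\<Sum>i\<in>S. trace (f i :: real^'n^'n))"
  by (simp add: trace_def sum_component) (rule sum.swap)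

lemma trace_outer: "trace (c *\<^sub>R outer u u) = c * (u \<bullet> u)"
  by (simp add: trace_def outer_def inner_vec_def sum_distrib_left)

lemma transpose_outer_sum: "transpose (\<Sum>i\<in>S. c i *\<^sub>R outer (u i) (u i)) = (\<Sum>i\<in>S. c i *\<^sub>R outer (u i) (u i))"
  by (simp add: vec_eq_iff transpose_def sum_component outer_def mult.commute)

lemma orth_sum_norm2:
  fixes u :: "'i \<Rightarrow> 'a::real_inner"
  assumes "finite J" "\<And>i j. i\<in>J \<Longrightarrow> j\<in>J \<Longrightarrow> u i \<bullet> u j = (if i = j then 1 else 0)"
  shows "(\<Sum>j\<in>J. a j *\<^sub>R u j) \<bullet> (\<Sum>j\<in>J. a j *\<^sub>R u j) = (\<Sum>j\<in>J. (a j)^2)"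
proof -
  have "(\<Sum>j\<in>J. a j *\<^sub>R u j) \<bullet> (\<Sum>j\<in>J. a j *\<^sub>R u j) = (\<Sum>i\<in>J. \<Sum>j\<in>J. a i * a j * (u i \<bullet> u j))"
    apply (simp add: inner_sum_left inner_sum_right sum_distrib_left mult.assoc)
    apply (subst sum.swap) apply (simp add: mult_ac)
    done
  also have "\<dots> = (\<Sum>i\<in>J. \<Sum>j\<in>J. if i = j then a i * a j else 0)"
    by (intro sum.cong refl) (simp add: assms)
  also have "\<dots> = (\<Sum>j\<in>J. (a j)^2)"
    using assms(1) by (simp add: power2_eq_square)
  finally show ?thesis .
qed

lemma orth_expand:
  fixes u :: "nat \<Rightarrow> real^'d"
  assumes orth: "\<forall>i\<in>{1..CARD('d)}. \<forall>j\<in>{1..CARD('d)}. u i \<bullet> u j = (if i = j then 1 else 0)"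
  shows "x = (\<Sum>j\<in>{1..CARD('d)}. (u j \<bullet> x) *\<^sub>R u j)"
proof -
  let ?I = "{1..CARD('d)}"
  let ?U = "u ` ?I"
  have inj: "inj_on u ?I"
  proof
    fix i j assume "i \<in> ?I" "j \<in> ?I" "u i = u j"
    then have "u i \<bullet> u j = 1" using orth by auto
    then show "i = j" using orth \<open>i \<in> ?I\<close> \<open>j \<in> ?I\<close> by (auto split: if_splits)
  qed
  have cardU: "card ?U = CARD('d)" using card_image[OF inj] by simp
  have po: "pairwise orthogonal ?U"
    unfolding pairwise_def orthogonal_def using orth by auto
  have nz: "0 \<notin> ?U"
  proof
    assume "0 \<in> ?U" then obtain i where "i \<in> ?I" "u i = 0" by auto
    then show False using orth by force
  qed
  have ind: "independent ?U" by (rule pairwise_orthogonal_independent[OF po nz])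
  have dU: "dim (UNIV :: (real^'d) set) \<le> card ?U" using cardU by simp
  have "UNIV \<subseteq> span ?U"
    by (rule card_ge_dim_independent[OF _ ind dU]) simp
  then have xs: "x - (\<Sum>j\<in>?I. (u j \<bullet> x) *\<^sub>R u j) \<in> span ?U" by auto
  let ?y = "x - (\<Sum>j\<in>?I. (u j \<bullet> x) *\<^sub>R u j)"
  have "orthogonal ?y v" if "v \<in> ?U" for v
  proof -
    obtain i where i: "i \<in> ?I" "v = u i" using \<open>v \<in> ?U\<close> by auto
    have "(\<Sum>j\<in>?I. (u j \<bullet> x) *\<^sub>R u j) \<bullet> u i = (\<Sum>j\<in>?I. (u j \<bullet> x) * (u j \<bullet> u i))"
      by (simp add: inner_sum_left)
    also have "\<dots> = (\<Sum>j\<in>?I. if j = i then u j \<bullet> x else 0)"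
      by (intro sum.cong refl) (use orth i in auto)
    also have "\<dots> = u i \<bullet> x" using i by simp
    finally have calc: "(\<Sum>j\<in>?I. (u j \<bullet> x) *\<^sub>R u j) \<bullet> u i = u i \<bullet> x" .
    show ?thesis unfolding orthogonal_def using i calc by (simp only: inner_diff_left inner_commute[of x])
  qed
  then have "orthogonal ?y ?y" using orthogonal_to_span[OF xs] by blast
  then show ?thesis by (simp add: orthogonal_def)
qed

lemma transpose_diff': "transpose (A - B :: real^'n^'n) = transpose A - transpose B"
  by (simp add: vec_eq_iff transpose_def)

lemma transpose_zero': "transpose (0 :: real^'n^'n) = 0"
  by (simp add: vec_eq_iff transpose_def)

lemma exists_feasible:
  fixes w :: "nat \<Rightarrow> real^'d" and V :: "(real^'d) set"
  assumes sub: "subspace V" and dimV: "dim V = k"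
    and close: "\<forall>i\<in>{1..n}. infdist (w i) V \<le> eps"
  shows "\<exists>X. sdp_feasible n w k X (eps^2)"
proof -
  obtain B where BV: "B \<subseteq> V" and po: "pairwise orthogonal B"
    and nB: "\<And>x. x \<in> B \<Longrightarrow> norm x = 1" and indB: "independent B"
    and cB: "card B = dim V" and sB: "span B = V"
    by (rule orthonormal_basis_subspace[OF sub]) auto
  have fin: "finite B" using indB by (rule independent_imp_finite)
  have orthB: "\<And>a b. a \<in> B \<Longrightarrow> b \<in> B \<Longrightarrow> id a \<bullet> id b = (if a = b then 1 else 0)"
  proof -
    fix a b assume ab: "a \<in> B" "b \<in> B"
    show "id a \<bullet> id b = (if a = b then 1 else 0)"
    proof (cases "a = b")
      case True then show ?thesis using nB[OF ab(1)] by (simp add: norm_eq_1)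
    next
      case False then show ?thesis using po ab unfolding pairwise_def orthogonal_def by auto
    qed
  qed
  define P :: "real^'d^'d" where "P = (\<Sum>b\<in>B. (\<lambda>_. 1::real) b *\<^sub>R outer (id b) (id b))"
  define Q where "Q x = (\<Sum>b\<in>B. (b \<bullet> x) *\<^sub>R b)" for x :: "real^'d"
  define X0 where "X0 = mat 1 - P"
  have Pv: "P *v x = Q x" for x
    by (simp add: P_def Q_def sum_mv outer_mv)
  have QQ: "Q x \<bullet> Q x = (\<Sum>b\<in>B. (b \<bullet> x)^2)" for x
    unfolding Q_def using orth_sum_norm2[of B id "\<lambda>b. b \<bullet> x", OF fin orthB] by simp
  have xQ: "x \<bullet> Q x = (\<Sum>b\<in>B. (b \<bullet> x)^2)" for x
    by (simp add: Q_def inner_sum_right power2_eq_square inner_commute)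
  have X0v: "X0 *v x = x - Q x" for x
    by (simp add: X0_def matrix_vector_mult_diff_rdistrib Pv)
  have xX0: "x \<bullet> (X0 *v x) = (x - Q x) \<bullet> (x - Q x)" for x
    by (simp add: X0v inner_diff_left inner_diff_right QQ xQ inner_commute[of "Q x" x])
  have tP: "transpose P = P" unfolding P_def by (rule transpose_outer_sum)
  have tX0: "transpose X0 = X0" by (simp add: X0_def transpose_diff' tP)
  have psdX0: "psd X0" unfolding psd_def using tX0 xX0 by simp
  have psdP: "psd P" unfolding psd_def using tP Pv xQ by (simp add: sum_nonneg)
  have l0: "0 \<preceq>\<^sub>L X0" unfolding loewner_le_def using tX0 psdX0 by (simp add: transpose_zero')
  have l1: "X0 \<preceq>\<^sub>L mat 1" unfolding loewner_le_def using tX0 psdP by (simp add: X0_def)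
  have trP: "trace P = real k"
  proof -
    have "trace P = (\<Sum>b\<in>B. 1 * (b \<bullet> b))" unfolding P_def trace_sum trace_outer by simp
    also have "\<dots> = card B" using orthB by simp
    finally show ?thesis using cB dimV by simp
  qed
  have trX0: "trace X0 = real CARD('d) - real k"
    by (simp add: X0_def trace_sub trace_I trP)
  have bound: "w i \<bullet> (X0 *v w i) \<le> eps^2" if i: "i \<in> {1..n}" for i
  proof -
    let ?x = "w i"
    have cl: "closed V" by (rule closed_subspace[OF sub])
    have ne: "V \<noteq> {}" using sub subspace_0 by blast
    obtain v where v: "v \<in> V" "infdist ?x V = dist ?x v"
      by (rule infdist_attains_inf[OF cl ne])
    have QV: "Q ?x \<in> V" unfolding Q_def sB[symmetric]
      by (intro span_sum span_mul span_base) 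
    have orthR: "orthogonal (?x - Q ?x) y" if "y \<in> B" for y
    proof -
      have "Q ?x \<bullet> y = (\<Sum>b\<in>B. (b \<bullet> ?x) * (id b \<bullet> id y))" by (simp add: Q_def inner_sum_left)
      also have "\<dots> = (\<Sum>b\<in>B. if b = y then b \<bullet> ?x else 0)"
        by (intro sum.cong refl) (use orthB that in auto)
      also have "\<dots> = y \<bullet> ?x" using that fin by simp
      finally have qy: "Q ?x \<bullet> y = y \<bullet> ?x" .
      show ?thesis unfolding orthogonal_def inner_diff_left qy by (simp add: inner_commute)
    qed
    have "Q ?x - v \<in> span B" using QV v(1) sB sub by (simp add: span_diff span_base subspace_diff)
    then have o: "orthogonal (?x - Q ?x) (Q ?x - v)" by (rule orthogonal_to_span) (rule orthR)
    have e: "?x - v = (?x - Q ?x) + (Q ?x - v)" by simp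
    have "(dist ?x v)^2 = ((?x - Q ?x) + (Q ?x - v)) \<bullet> ((?x - Q ?x) + (Q ?x - v))"
      by (simp only: dist_norm power2_norm_eq_inner e)
    also have "\<dots> = (?x - Q ?x) \<bullet> (?x - Q ?x) + (Q ?x - v) \<bullet> (Q ?x - v)"
      using o unfolding orthogonal_def inner_add_left inner_add_right inner_commute[of "Q ?x - v" "?x - Q ?x"]
      by linarith
    finally have "(dist ?x v)^2 = (?x - Q ?x) \<bullet> (?x - Q ?x) + (Q ?x - v) \<bullet> (Q ?x - v)" .
    then have "w i \<bullet> (X0 *v w i) \<le> (infdist ?x V)^2" using xX0 v(2) by simp
    also have "\<dots> \<le> eps^2" using close i infdist_nonneg by (intro power_mono) auto
    finally show ?thesis .
  qed
  have "sdp_feasible n w k X0 (eps^2)"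
    unfolding sdp_feasible_def using bound l0 l1 trX0 by blast
  then show ?thesis by blast
qed

theorem theorem5:
  fixes w :: "nat \<Rightarrow> real^'d" and n k :: nat and eps :: real
    and Vstar :: "(real^'d) set"
    and Xs :: "real^'d^'d" and ts :: real
    and u :: "nat \<Rightarrow> real^'d" and lam :: "nat \<Rightarrow> real"
    and c :: real
  assumes k_ge: "k \<ge> 1"
    and Vstar_sub: "subspace Vstar" and Vstar_dim: "dim Vstar = k"
    and Vstar_close: "\<forall>i\<in>{1..n}. infdist (w i) Vstar \<le> eps"
    and opt: "sdp_optimal n w k Xs ts"
    and orth: "\<forall>i\<in>{1..CARD('d)}. \<forall>j\<in>{1..CARD('d)}. u i \<bullet> u j = (if i = j then 1 else 0)"
    and decomp: "Xs = (\<Sum>i\<in>{1..CARD('d)}. lam i *\<^sub>R outer (u i) (u i))"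
    and lam_nonneg: "0 \<le> lam 1"
    and lam_sorted: "\<forall>i\<in>{1..CARD('d)}. \<forall>j\<in>{1..CARD('d)}. i \<le> j \<longrightarrow> lam i \<le> lam j"
    and lam_le1: "lam CARD('d) \<le> 1"
    and c_gt: "c > 1"
    and ck_int: "c * real k \<in> \<int>"
    and ck_le: "c * real k \<le> real CARD('d)"
  shows "dim (span (u ` {1..nat \<lfloor>c * real k\<rfloor> - 1})) = nat \<lfloor>c * real k\<rfloor> - 1 \<and>
         (\<forall>i\<in>{1..n}. infdist (w i) (span (u ` {1..nat \<lfloor>c * real k\<rfloor> - 1}))
                        \<le> sqrt (1 + 1 / (c - 1)) * eps)"
proof -
  let ?d = "CARD('d)"
  let ?I = "{1..CARD('d)}"
  define m where "m = nat \<lfloor>c * real k\<rfloor>"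
  obtain z where z: "c * real k = of_int z" using ck_int by (auto elim: Ints_cases)
  have kpos: "real k \<ge> 1" using k_ge by simp
  have ckgt: "c * real k > real k" using c_gt kpos by simp
  have mreal: "real m = c * real k" unfolding m_def using z ckgt kpos by simp
  have m_le: "m \<le> ?d" using mreal ck_le by linarith
  have m_ge2: "m \<ge> 2" using mreal ckgt kpos by linarith
  have dpos: "1 \<le> ?d" using m_le m_ge2 by linarith
  have lam01: "0 \<le> lam j \<and> lam j \<le> 1" if "j \<in> ?I" for j
  proof -
    have "lam 1 \<le> lam j" using lam_sorted that dpos by auto
    moreover have "lam j \<le> lam ?d" using lam_sorted that dpos by auto
    ultimately show ?thesis using lam_nonneg lam_le1 by linarith
  qed
  have feas: "sdp_feasible n w k Xs ts" using opt unfolding sdp_optimal_def by blast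
  obtain X0 where X0: "sdp_feasible n w k X0 (eps^2)"
    using exists_feasible[OF Vstar_sub Vstar_dim Vstar_close] by blast
  have ts_le: "ts \<le> eps^2" using opt X0 unfolding sdp_optimal_def by blast
  have uu: "u j \<bullet> u j = 1" if "j \<in> ?I" for j using orth that by auto
  have trXs: "trace Xs = (\<Sum>j\<in>?I. lam j)"
    unfolding decomp trace_sum trace_outer by (intro sum.cong refl) (simp add: uu)
  have sumlam: "(\<Sum>j\<in>?I. lam j) = real ?d - real k"
    using feas trXs unfolding sdp_feasible_def by simp
  have lam_m: "c * lam m \<ge> c - 1"
  proof -
    have split: "?I = {1..m} \<union> {Suc m..?d}" using m_le by auto
    have "(\<Sum>j\<in>?I. lam j) = (\<Sum>j\<in>{1..m}. lam j) + (\<Sum>j\<in>{Suc m..?d}. lam j)"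
      unfolding split by (rule sum.union_disjoint) auto
    moreover have "(\<Sum>j\<in>{1..m}. lam j) \<le> of_nat (card {1..m}) * lam m"
      by (rule sum_bounded_above) (use lam_sorted m_le m_ge2 in auto)
    moreover have "(\<Sum>j\<in>{Suc m..?d}. lam j) \<le> of_nat (card {Suc m..?d}) * 1"
      by (rule sum_bounded_above) (use lam01 in auto)
    ultimately have "real ?d - real k \<le> real m * lam m + real (?d - m)"
      using sumlam by simp
    then have "real m * lam m \<ge> real m - real k" using m_le by (simp add: of_nat_diff)
    then have "c * real k * lam m \<ge> (c - 1) * real k" using mreal by (simp add: algebra_simps)
    then have "real k * (c * lam m) \<ge> real k * (c - 1)" by (simp add: algebra_simps)
    then show ?thesis using kpos by (simp add: mult_le_cancel_left)
  qed
  have lam_m_pos: "lam m > 0"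
  proof -
    have "c * lam m > 0" using lam_m c_gt by linarith
    then show ?thesis using c_gt by (simp add: zero_less_mult_iff)
  qed
  have Xv: "Xs *v x = (\<Sum>j\<in>?I. (lam j * (u j \<bullet> x)) *\<^sub>R u j)" for x
    unfolding decomp by (simp add: sum_mv scale_mv outer_mv)
  have quad: "x \<bullet> (Xs *v x) = (\<Sum>j\<in>?I. lam j * (u j \<bullet> x)^2)" for x
    unfolding Xv by (simp add: inner_sum_right power2_eq_square inner_commute mult_ac)
  have orthJ: "\<And>i j. i \<in> {1..m-1} \<Longrightarrow> j \<in> {1..m-1} \<Longrightarrow> u i \<bullet> u j = (if i = j then 1 else 0)"
    using orth m_le by auto
  let ?U = "u ` {1..m-1}"
  have inj: "inj_on u {1..m-1}"
  proof
    fix i j assume ij: "i \<in> {1..m-1}" "j \<in> {1..m-1}" "u i = u j"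
    then have "u i \<bullet> u j = 1" using orthJ by auto
    then show "i = j" using orthJ[OF ij(1,2)] by (auto split: if_splits)
  qed
  have po: "pairwise orthogonal ?U"
    unfolding pairwise_def orthogonal_def using orthJ by auto
  have nz: "0 \<notin> ?U"
  proof
    assume "0 \<in> ?U" then obtain i where "i \<in> {1..m-1}" "u i = 0" by auto
    then show False using orthJ by force
  qed
  have ind: "independent ?U" by (rule pairwise_orthogonal_independent[OF po nz])
  have dimU: "dim (span ?U) = m - 1"
    using dim_span_eq_card_independent[OF ind] card_image[OF inj] by simp
  have dist_part: "infdist (w i) (span ?U) \<le> sqrt (1 + 1 / (c - 1)) * eps" if i: "i \<in> {1..n}" for i
  proof -
    let ?x = "w i"
    have eps0: "0 \<le> eps" using Vstar_close i infdist_nonneg by (meson order_trans)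
    have ex: "?x = (\<Sum>j\<in>?I. (u j \<bullet> ?x) *\<^sub>R u j)" by (rule orth_expand[OF orth])
    have split: "?I = {1..m-1} \<union> {m..?d}" using m_le m_ge2 by auto
    have "(\<Sum>j\<in>?I. (u j \<bullet> ?x) *\<^sub>R u j) = (\<Sum>j\<in>{1..m-1}. (u j \<bullet> ?x) *\<^sub>R u j) + (\<Sum>j\<in>{m..?d}. (u j \<bullet> ?x) *\<^sub>R u j)"
      unfolding split by (rule sum.union_disjoint) auto
    then have diff: "?x - (\<Sum>j\<in>{1..m-1}. (u j \<bullet> ?x) *\<^sub>R u j) = (\<Sum>j\<in>{m..?d}. (u j \<bullet> ?x) *\<^sub>R u j)"
      using ex by (simp add: algebra_simps)
    have inU: "(\<Sum>j\<in>{1..m-1}. (u j \<bullet> ?x) *\<^sub>R u j) \<in> span ?U"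
      by (intro span_sum span_mul span_base) auto
    define S where "S = (\<Sum>j\<in>{m..?d}. (u j \<bullet> ?x)^2)"
    have orthM: "\<And>i j. i \<in> {m..?d} \<Longrightarrow> j \<in> {m..?d} \<Longrightarrow> u i \<bullet> u j = (if i = j then 1 else 0)"
      using orth m_ge2 by auto
    have normS: "(dist ?x (\<Sum>j\<in>{1..m-1}. (u j \<bullet> ?x) *\<^sub>R u j))^2 = S"
      unfolding dist_norm diff power2_norm_eq_inner S_def
      by (rule orth_sum_norm2) (auto simp: orthM)
    have "lam m * S = (\<Sum>j\<in>{m..?d}. lam m * (u j \<bullet> ?x)^2)" by (simp add: S_def sum_distrib_left)
    also have "\<dots> \<le> (\<Sum>j\<in>{m..?d}. lam j * (u j \<bullet> ?x)^2)"
      by (intro sum_mono mult_right_mono) (use lam_sorted m_ge2 in auto)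
    also have "\<dots> \<le> (\<Sum>j\<in>?I. lam j * (u j \<bullet> ?x)^2)"
      by (rule sum_mono2) (use m_ge2 lam01 in auto)
    also have "\<dots> = ?x \<bullet> (Xs *v ?x)" by (rule quad[symmetric])
    also have "\<dots> \<le> ts" using feas i unfolding sdp_feasible_def by blast
    also have "\<dots> \<le> eps^2" by (rule ts_le)
    finally have lS: "lam m * S \<le> eps^2" .
    have S0: "0 \<le> S" unfolding S_def by (simp add: sum_nonneg)
    have "c * lam m * S \<ge> (c - 1) * S" using lam_m S0 by (simp add: mult_right_mono)
    moreover have "c * (lam m * S) \<le> c * eps^2" using lS c_gt by (intro mult_left_mono) auto
    ultimately have "(c - 1) * S \<le> c * eps^2" by (simp add: mult.assoc)
    then have "S \<le> (1 + 1 / (c - 1)) * eps^2" using c_gt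
      by (simp add: field_simps)
    then have "sqrt S \<le> sqrt ((1 + 1 / (c - 1)) * eps^2)" by (rule real_sqrt_le_mono)
    also have "\<dots> = sqrt (1 + 1 / (c - 1)) * eps" using eps0 by (simp add: real_sqrt_mult)
    finally have "sqrt S \<le> sqrt (1 + 1 / (c - 1)) * eps" .
    moreover have "dist ?x (\<Sum>j\<in>{1..m-1}. (u j \<bullet> ?x) *\<^sub>R u j) = sqrt S"
      using normS by (metis real_sqrt_unique zero_le_dist)
    moreover have "infdist ?x (span ?U) \<le> dist ?x (\<Sum>j\<in>{1..m-1}. (u j \<bullet> ?x) *\<^sub>R u j)"
      by (rule infdist_le[OF inU])
    ultimately show ?thesis by linarith
  qed
  show ?thesis unfolding m_def[symmetric] using dimU dist_part by blast
qed

end
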